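(* Let $G$ be a weakly-reversible chemical reaction network in $s$ species, let $\mathbf{k}$ be a field of characteristic zero, and let $(\mathcal{E}_G)\subseteq \mathbf{k}[x_1,\dots,x_s]$ be the ideal generated by its associated event-system. Let $M$ and $N$ be distinct monic monomials in $x_1,\dots,x_s$. Then $M-N\in(\mathcal{E}_G)$ if and only if $M$ and $N$ are path-connected in the event-graph $\overline{G}$.
   Context: A chemical reaction network (CRN) consists of positive integers $s$ (species) and $n$ (complexes), a finite directed graph $G$ with vertex set $\{1,\dots,n\}$ and edge set $E(G)\subseteq\{1,\dots,n\}^2$, and an injective labeling of vertex $i$ by a monic monomial $\psi_i=\prod_{j=1}^s x_j^{y_{ij}}$ with $y_{ij}\in\mathbb{Z}_{\ge 0}$. $G$ is weakly-reversible iff each connected component of $G$ is strongly connected. The associated event-system $\mathcal{E}_G$ is the set of binomials $\psi_i-\psi_j$, one for each pair $\{i,j\}$ with $(i,j)\in E(G)$ or $(j,i)\in E(G)$ (the sign being fixed by some total order on monomials; it is irrelevant for the generated ideal). The event-graph $\overline{G}$ is the directed graph whose vertex set is the set of all monic monomials in $x_1,\dots,x_s$ (including $1$), with an edge $(N\psi_i, N\psi_j)$ for every $(i,j)\in E(G)$ and every monic monomial $N$. *)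

theory Defs
  imports "HOL-Library.Poly_Mapping"
begin

text \<open>Monic monomials in x_1..x_s are exponent vectors nat =>0 nat supported in {1..s};
  polynomials in k[x_1..x_s] are finitely supported maps from such monomials to k
  (multiplication = convolution, from HOL-Library.Poly_Mapping).\<close>

definition monomials :: "nat \<Rightarrow> (nat \<Rightarrow>\<^sub>0 nat) set" where
  "monomials s = {m. Poly_Mapping.keys m \<subseteq> {1..s}}"

definition polys :: "nat \<Rightarrow> ((nat \<Rightarrow>\<^sub>0 nat) \<Rightarrow>\<^sub>0 'k::comm_ring_1) set" where
  "polys s = {p. Poly_Mapping.keys p \<subseteq> monomials s}"

definition mon :: "(nat \<Rightarrow>\<^sub>0 nat) \<Rightarrow> ((nat \<Rightarrow>\<^sub>0 nat) \<Rightarrow>\<^sub>0 'k::comm_ring_1)" where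
  "mon m = Poly_Mapping.single m 1"

definition gen_ideal :: "nat \<Rightarrow> ((nat \<Rightarrow>\<^sub>0 nat) \<Rightarrow>\<^sub>0 'k::comm_ring_1) set
    \<Rightarrow> ((nat \<Rightarrow>\<^sub>0 nat) \<Rightarrow>\<^sub>0 'k) set" where
  "gen_ideal s B = {p. \<exists>F c. finite F \<and> F \<subseteq> B \<and> (\<forall>f\<in>F. c f \<in> polys s)
                          \<and> p = (\<Sum>f\<in>F. c f * f)}"

definition weakly_reversible :: "(nat \<times> nat) set \<Rightarrow> bool" where
  "weakly_reversible E \<longleftrightarrow> (\<forall>i j. (i, j) \<in> (E \<union> E\<inverse>)\<^sup>* \<longrightarrow> (i, j) \<in> E\<^sup>*)"

definition event_system ::
    "(nat \<Rightarrow> (nat \<Rightarrow>\<^sub>0 nat)) \<Rightarrow> (nat \<times> nat) set \<Rightarrow> ((nat \<Rightarrow>\<^sub>0 nat) \<Rightarrow>\<^sub>0 'k::comm_ring_1) set" where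
  "event_system y E = {mon (y i) - mon (y j) | i j. (i, j) \<in> E}"

definition event_graph ::
    "nat \<Rightarrow> (nat \<Rightarrow> (nat \<Rightarrow>\<^sub>0 nat)) \<Rightarrow> (nat \<times> nat) set \<Rightarrow> ((nat \<Rightarrow>\<^sub>0 nat) \<times> (nat \<Rightarrow>\<^sub>0 nat)) set" where
  "event_graph s y E = {(N + y i, N + y j) | N i j. N \<in> monomials s \<and> (i, j) \<in> E}"

end

theory Submission
  imports Defs
begin

definition LL :: "(nat \<Rightarrow>\<^sub>0 nat) set \<Rightarrow> ((nat \<Rightarrow>\<^sub>0 nat) \<Rightarrow>\<^sub>0 'k::comm_ring_1) \<Rightarrow> 'k" where
  "LL C p = (\<Sum>m\<in>Poly_Mapping.keys p \<inter> C. Poly_Mapping.lookup p m)"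

lemma LL_fin:
  assumes "finite S" "Poly_Mapping.keys p \<subseteq> S"
  shows "LL C p = (\<Sum>m\<in>S \<inter> C. Poly_Mapping.lookup p m)"
  unfolding LL_def
  by (rule sum.mono_neutral_left) (use assms in \<open>auto simp: in_keys_iff\<close>)

lemma LL_add: "LL C (p + q) = LL C p + LL C q"
proof -
  let ?S = "Poly_Mapping.keys p \<union> Poly_Mapping.keys q"
  have "LL C (p + q) = (\<Sum>m\<in>?S \<inter> C. Poly_Mapping.lookup (p+q) m)"
    by (rule LL_fin) (auto simp: keys_add)
  also have "\<dots> = (\<Sum>m\<in>?S \<inter> C. Poly_Mapping.lookup p m) + (\<Sum>m\<in>?S \<inter> C. Poly_Mapping.lookup q m)"
    by (simp add: lookup_add sum.distrib)
  also have "\<dots> = LL C p + LL C q"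
    by (subst (1 2) LL_fin[of ?S]) auto
  finally show ?thesis .
qed

lemma LL_zero: "LL C 0 = 0"
  by (simp add: LL_def)

lemma LL_diff: "LL C (p - q) = LL C p - LL C q"
  by (metis LL_add diff_add_cancel eq_diff_eq)

lemma LL_sum: "LL C (sum g F) = (\<Sum>f\<in>F. LL C (g f))"
  by (induction F rule: infinite_finite_induct) (auto simp: LL_zero LL_add)

lemma LL_single: "LL C (Poly_Mapping.single m a) = (if m \<in> C then a else 0)"
  by (simp add: LL_def)

lemma expand: "(c::('a::comm_monoid_add \<Rightarrow>\<^sub>0 'b::comm_monoid_add)) =
   (\<Sum>u\<in>Poly_Mapping.keys c. Poly_Mapping.single u (Poly_Mapping.lookup c u))"
proof (rule poly_mapping_eqI)
  fix m
  have "(\<Sum>u\<in>Poly_Mapping.keys c. Poly_Mapping.lookup (Poly_Mapping.single u (Poly_Mapping.lookup c u)) m)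
     = (\<Sum>u\<in>Poly_Mapping.keys c. if u = m then Poly_Mapping.lookup c m else 0)"
    by (rule sum.cong) (auto simp: lookup_single when_def)
  also have "\<dots> = Poly_Mapping.lookup c m"
    by (auto simp: in_keys_iff)
  finally show "Poly_Mapping.lookup c m = Poly_Mapping.lookup (\<Sum>u\<in>Poly_Mapping.keys c. Poly_Mapping.single u (Poly_Mapping.lookup c u)) m"
    by (simp add: lookup_sum)
qed

lemma LL_gen:
  fixes c :: "(nat \<Rightarrow>\<^sub>0 nat) \<Rightarrow>\<^sub>0 'k::comm_ring_1"
  assumes "\<And>u. u \<in> Poly_Mapping.keys c \<Longrightarrow> (u + a \<in> C \<longleftrightarrow> u + b \<in> C)"
  shows "LL C (c * (mon a - mon b)) = 0"
proof -
  have "c * (mon a - mon b) = (\<Sum>u\<in>Poly_Mapping.keys c. Poly_Mapping.single u (Poly_Mapping.lookup c u) * (mon a - mon b))"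
    by (subst expand) (simp add: sum_distrib_right)
  also have "\<dots> = (\<Sum>u\<in>Poly_Mapping.keys c. Poly_Mapping.single (u + a) (Poly_Mapping.lookup c u)
        - Poly_Mapping.single (u + b) (Poly_Mapping.lookup c u))"
    by (simp add: mon_def right_diff_distrib mult_single)
  finally have "LL C (c * (mon a - mon b)) = (\<Sum>u\<in>Poly_Mapping.keys c. LL C (Poly_Mapping.single (u + a) (Poly_Mapping.lookup c u)
        - Poly_Mapping.single (u + b) (Poly_Mapping.lookup c u)))"
    by (simp add: LL_sum)
  also have "\<dots> = 0"
    by (rule sum.neutral) (use assms in \<open>auto simp: LL_diff LL_single\<close>)
  finally show ?thesis .
qed

lemma ideal_add:
  fixes p q :: "(nat \<Rightarrow>\<^sub>0 nat) \<Rightarrow>\<^sub>0 'k::comm_ring_1"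
  assumes "p \<in> gen_ideal s B" "q \<in> gen_ideal s B"
  shows "p + q \<in> gen_ideal s B"
proof -
  obtain F1 c1 where 1: "finite F1" "F1 \<subseteq> B" "\<forall>f\<in>F1. c1 f \<in> polys s" "p = (\<Sum>f\<in>F1. c1 f * f)"
    using assms(1) unfolding gen_ideal_def by blast
  obtain F2 c2 where 2: "finite F2" "F2 \<subseteq> B" "\<forall>f\<in>F2. c2 f \<in> polys s" "q = (\<Sum>f\<in>F2. c2 f * f)"
    using assms(2) unfolding gen_ideal_def by blast
  define d1 where "d1 f = (if f \<in> F1 then c1 f else 0)" for f
  define d2 where "d2 f = (if f \<in> F2 then c2 f else 0)" for f
  have z: "(0 :: (nat \<Rightarrow>\<^sub>0 nat) \<Rightarrow>\<^sub>0 'k) \<in> polys s"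
    by (simp add: polys_def)
  have padd: "a + b \<in> polys s" if "a \<in> polys s" "b \<in> polys s" for a b :: "(nat \<Rightarrow>\<^sub>0 nat) \<Rightarrow>\<^sub>0 'k"
    using that keys_add[of a b] unfolding polys_def by blast
  have pol: "\<forall>f\<in>F1 \<union> F2. d1 f + d2 f \<in> polys s"
  proof
    fix f assume "f \<in> F1 \<union> F2"
    have "d1 f \<in> polys s" using 1(3) z unfolding d1_def by auto
    moreover have "d2 f \<in> polys s" using 2(3) z unfolding d2_def by auto
    ultimately show "d1 f + d2 f \<in> polys s" by (rule padd)
  qed
  have "p = (\<Sum>f\<in>F1 \<union> F2. d1 f * f)"
    unfolding 1(4) by (rule sum.mono_neutral_cong_left) (simp_all add: 1(1) 2(1) d1_def)
  moreover have "q = (\<Sum>f\<in>F1 \<union> F2. d2 f * f)"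
    unfolding 2(4) by (rule sum.mono_neutral_cong_left) (simp_all add: 1(1) 2(1) d2_def)
  ultimately have "p + q = (\<Sum>f\<in>F1 \<union> F2. (d1 f + d2 f) * f)"
    by (simp add: sum.distrib distrib_right)
  moreover have "finite (F1 \<union> F2)" "F1 \<union> F2 \<subseteq> B" using 1(1,2) 2(1,2) by auto
  ultimately show ?thesis unfolding gen_ideal_def using pol
    by (intro CollectI exI[of _ "F1 \<union> F2"] exI[of _ "\<lambda>f. d1 f + d2 f"]) simp
qed

lemma ideal_gen:
  assumes "g \<in> B" "c \<in> polys s"
  shows "c * g \<in> gen_ideal s B"
  unfolding gen_ideal_def using assms by (intro CollectI exI[of _ "{g}"] exI[of _ "\<lambda>_. c"]) simp

lemma mon_add: "(mon (a + b) :: (nat \<Rightarrow>\<^sub>0 nat) \<Rightarrow>\<^sub>0 'k::comm_ring_1) = mon a * mon b"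
  by (simp add: mon_def mult_single)

theorem lemma3p1:
  fixes s n :: nat
    and E :: "(nat \<times> nat) set"
    and y :: "nat \<Rightarrow> (nat \<Rightarrow>\<^sub>0 nat)"
    and M N :: "nat \<Rightarrow>\<^sub>0 nat"
  assumes "0 < s" and "0 < n"
    and "E \<subseteq> {1..n} \<times> {1..n}"
    and "inj_on y {1..n}"
    and "\<forall>i\<in>{1..n}. y i \<in> monomials s"
    and "weakly_reversible E"
    and "M \<in> monomials s" and "N \<in> monomials s" and "M \<noteq> N"
  shows "(mon M - mon N :: (nat \<Rightarrow>\<^sub>0 nat) \<Rightarrow>\<^sub>0 'k::field_char_0)
            \<in> gen_ideal s (event_system y E)
         \<longleftrightarrow> (M, N) \<in> (event_graph s y E \<union> (event_graph s y E)\<inverse>)\<^sup>*"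
proof
  let ?R = "event_graph s y E \<union> (event_graph s y E)\<inverse>"
  define C where "C = {x. (M, x) \<in> ?R\<^sup>*}"
  have inv: "u + y i \<in> C \<longleftrightarrow> u + y j \<in> C" if "u \<in> monomials s" "(i, j) \<in> E" for u i j
  proof -
    have e: "(u + y i, u + y j) \<in> event_graph s y E"
      unfolding event_graph_def using that by (intro CollectI exI[of _ u] exI[of _ i] exI[of _ j]) simp
    have r1: "(u + y i, u + y j) \<in> ?R" and r2: "(u + y j, u + y i) \<in> ?R"
      using e by auto
    show ?thesis
    proof
      assume "u + y i \<in> C"
      then have "(M, u + y i) \<in> ?R\<^sup>*" unfolding C_def by simp
      from rtrancl_into_rtrancl[OF this r1] show "u + y j \<in> C" unfolding C_def by simp
    next
      assume "u + y j \<in> C"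
      then have "(M, u + y j) \<in> ?R\<^sup>*" unfolding C_def by simp
      from rtrancl_into_rtrancl[OF this r2] show "u + y i \<in> C" unfolding C_def by simp
    qed
  qed
  assume "(mon M - mon N :: (nat \<Rightarrow>\<^sub>0 nat) \<Rightarrow>\<^sub>0 'k) \<in> gen_ideal s (event_system y E)"
  then obtain F c where F: "finite F" "F \<subseteq> event_system y E" "\<forall>f\<in>F. c f \<in> polys s"
    "(mon M - mon N :: (nat \<Rightarrow>\<^sub>0 nat) \<Rightarrow>\<^sub>0 'k) = (\<Sum>f\<in>F. c f * f)"
    unfolding gen_ideal_def by blast
  have "LL C (c f * f) = 0" if fF: "f \<in> F" for f
  proof -
    obtain i j where ij: "f = mon (y i) - mon (y j)" "(i, j) \<in> E"
      using F(2) fF unfolding event_system_def by blast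
    have "Poly_Mapping.keys (c f) \<subseteq> monomials s"
      using F(3) fF unfolding polys_def by blast
    then show ?thesis unfolding ij(1) by (intro LL_gen) (use inv[OF _ ij(2)] in blast)
  qed
  then have "LL C (mon M - mon N :: (nat \<Rightarrow>\<^sub>0 nat) \<Rightarrow>\<^sub>0 'k) = 0"
    unfolding F(4) LL_sum by simp
  moreover have "M \<in> C" unfolding C_def by simp
  ultimately have "N \<in> C"
    by (simp add: LL_diff mon_def LL_single split: if_splits)
  then show "(M, N) \<in> ?R\<^sup>*" unfolding C_def by simp
next
  let ?R = "event_graph s y E \<union> (event_graph s y E)\<inverse>"
  assume "(M, N) \<in> ?R\<^sup>*"
  then show "(mon M - mon N :: (nat \<Rightarrow>\<^sub>0 nat) \<Rightarrow>\<^sub>0 'k) \<in> gen_ideal s (event_system y E)"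
  proof (induction rule: rtrancl_induct)
    case base
    have "(0 :: (nat \<Rightarrow>\<^sub>0 nat) \<Rightarrow>\<^sub>0 'k) \<in> gen_ideal s (event_system y E)"
      unfolding gen_ideal_def by (intro CollectI exI[of _ "{}"]) auto
    then show ?case by simp
  next
    case (step P Q)
    have "(mon P - mon Q :: (nat \<Rightarrow>\<^sub>0 nat) \<Rightarrow>\<^sub>0 'k) \<in> gen_ideal s (event_system y E)"
    proof -
      obtain u i j where uij: "u \<in> monomials s" "(i, j) \<in> E"
        "(P = u + y i \<and> Q = u + y j) \<or> (P = u + y j \<and> Q = u + y i)"
        using step(2) unfolding event_graph_def by auto
      have g: "(mon (y i) - mon (y j) :: (nat \<Rightarrow>\<^sub>0 nat) \<Rightarrow>\<^sub>0 'k) \<in> event_system y E"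
        using uij(2) unfolding event_system_def by blast
      have pu: "(mon u :: (nat \<Rightarrow>\<^sub>0 nat) \<Rightarrow>\<^sub>0 'k) \<in> polys s" "(- mon u :: (nat \<Rightarrow>\<^sub>0 nat) \<Rightarrow>\<^sub>0 'k) \<in> polys s"
        using uij(1) by (auto simp: polys_def mon_def)
      from uij(3) show ?thesis
      proof
        assume "P = u + y i \<and> Q = u + y j"
        then have "(mon P - mon Q :: (nat \<Rightarrow>\<^sub>0 nat) \<Rightarrow>\<^sub>0 'k) = mon u * (mon (y i) - mon (y j))"
          by (simp add: mon_add right_diff_distrib)
        then show ?thesis using ideal_gen[OF g pu(1)] by simp
      next
        assume "P = u + y j \<and> Q = u + y i"
        then have "(mon P - mon Q :: (nat \<Rightarrow>\<^sub>0 nat) \<Rightarrow>\<^sub>0 'k) = (- mon u) * (mon (y i) - mon (y j))"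
          by (simp add: mon_add right_diff_distrib)
        then show ?thesis using ideal_gen[OF g pu(2)] by simp
      qed
    qed
    from ideal_add[OF step(3) this] show ?case by simp
  qed
qed

end
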